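(* Let $\mathcal{G}$ and $\mathcal{H}$ be regular families of finite subsets of $\mathbb{N}$. Suppose $F_1<F_2<\dots<F_k$ are finite subsets of $\mathbb{N}$ with $\bigcup_{j=1}^kF_j\in\mathcal{G}[\mathcal{H}]$. If $F_j\notin\mathcal{H}$ for all $1\le j\le k$, then $\{\min F_1,\dots,\min F_k\}\in\mathcal{G}$.
   Context: For finite $E,F\subseteq\mathbb{N}$, $E<F$ means $\max E<\min F$. A family $\mathcal{F}$ of finite subsets of $\mathbb{N}$ is regular if it is hereditary (closed under subsets), spreading (if $\{n_1<\dots<n_k\}\in\mathcal{F}$ and $m_1<\dots<m_k$ with $m_i\ge n_i$, then $\{m_1,\dots,m_k\}\in\mathcal{F}$), and compact in $2^{\mathbb{N}}$ (product topology). A sequence $E_1<\dots<E_k$ is $\mathcal{M}$-admissible if $\{\min E_1,\dots,\min E_k\}\in\mathcal{M}$. For regular $\mathcal{M},\mathcal{N}$, $\mathcal{M}[\mathcal{N}]=\{\bigcup_{i=1}^kF_i: F_i\in\mathcal{N}\text{ for all }i,\ \{F_1,\dots,F_k\}\text{ is }\mathcal{M}\text{-admissible}\}$. *)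

theory Defs
  imports "HOL-Analysis.Analysis"
begin

definition hereditary :: "nat set set \<Rightarrow> bool" where
  "hereditary F \<longleftrightarrow> (\<forall>A\<in>F. \<forall>B. B \<subseteq> A \<longrightarrow> B \<in> F)"

text \<open>Spreading: if {n_1<...<n_k} is in F and m_1<...<m_k with m_i >= n_i then
  {m_1,...,m_k} is in F; equivalently the image of A under any map strictly
  increasing on A with f n >= n.\<close>
definition spreading :: "nat set set \<Rightarrow> bool" where
  "spreading F \<longleftrightarrow>
     (\<forall>A\<in>F. \<forall>f. strict_mono_on A f \<and> (\<forall>n\<in>A. n \<le> f n) \<longrightarrow> f ` A \<in> F)"

text \<open>Compactness in the Cantor space 2^N (product of discrete two-point spaces),
  identifying a set with its indicator function.\<close>
definition compact_family :: "nat set set \<Rightarrow> bool" where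
  "compact_family F \<longleftrightarrow>
     compactin (product_topology (\<lambda>_::nat. discrete_topology (UNIV::bool set)) UNIV)
               ((\<lambda>A n. n \<in> A) ` F)"

definition regular_family :: "nat set set \<Rightarrow> bool" where
  "regular_family F \<longleftrightarrow> (\<forall>A\<in>F. finite A) \<and> hereditary F \<and> spreading F \<and> compact_family F"

definition block_seq :: "nat set list \<Rightarrow> bool" where
  "block_seq Es \<longleftrightarrow> (\<forall>E\<in>set Es. finite E \<and> E \<noteq> {}) \<and>
     (\<forall>i j. i < j \<and> j < length Es \<longrightarrow> Max (Es ! i) < Min (Es ! j))"

definition admissible :: "nat set set \<Rightarrow> nat set list \<Rightarrow> bool" where
  "admissible M Es \<longleftrightarrow> block_seq Es \<and> Min ` set Es \<in> M"

definition family_comp :: "nat set set \<Rightarrow> nat set set \<Rightarrow> nat set set" where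
  "family_comp M N = {\<Union>(set Es) | Es. admissible M Es \<and> set Es \<subseteq> N}"

end

theory Submission
  imports Defs
begin

lemma blk_fin:
  assumes "block_seq Es" "i < length Es"
  shows "finite (Es ! i) \<and> Es ! i \<noteq> {}"
proof -
  have "Es ! i \<in> set Es" using assms(2) by (rule nth_mem)
  thus ?thesis using assms(1) unfolding block_seq_def by blast
qed

lemma blk_elem:
  assumes "block_seq Es" "i < length Es" "x \<in> Es ! i"
  shows "Min (Es ! i) \<le> x \<and> x \<le> Max (Es ! i)"
  using blk_fin[OF assms(1,2)] assms(3) by simp

lemma blk_lt:
  assumes "block_seq Es" "i < i'" "i' < length Es"
  shows "Max (Es ! i) < Min (Es ! i')"
  using assms unfolding block_seq_def by blast

lemma blk_ne:
  assumes "block_seq Es" "i < length Es"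
  shows "Min (Es ! i) \<in> Es ! i \<and> Max (Es ! i) \<in> Es ! i"
  using blk_fin[OF assms] by simp

theorem lemma2:
  fixes G H :: "nat set set" and Fs :: "nat set list"
  assumes "regular_family G" and "regular_family H"
    and "block_seq Fs"
    and "\<Union>(set Fs) \<in> family_comp G H"
    and "\<forall>j < length Fs. Fs ! j \<notin> H"
  shows "Min ` set Fs \<in> G"
proof -
  obtain Es where Es: "\<Union>(set Fs) = \<Union>(set Es)" "block_seq Es" "Min ` set Es \<in> G" "set Es \<subseteq> H"
    using assms(4) unfolding family_comp_def admissible_def by auto
  have hG: "hereditary G" and sG: "spreading G" and hH: "hereditary H"
    using assms(1,2) unfolding regular_family_def by auto
  define n where "n = length Fs"
  have ex: "\<exists>i. i < length Es \<and> Min (Fs ! j) \<in> Es ! i" if "j < n" for j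
  proof -
    have "Min (Fs ! j) \<in> \<Union>(set Fs)" using blk_ne[OF assms(3)] that n_def nth_mem by blast
    thus ?thesis using Es(1) by (auto simp: in_set_conv_nth)
  qed
  define ix where "ix j = (SOME i. i < length Es \<and> Min (Fs ! j) \<in> Es ! i)" for j
  have ix: "ix j < length Es \<and> Min (Fs ! j) \<in> Es ! ix j" if "j < n" for j
    unfolding ix_def using someI_ex[OF ex[OF that]] .
  have big: "\<exists>x \<in> Fs ! j. Max (Es ! ix j) < x" if j: "j < n" for j
  proof -
    have "\<not> Fs ! j \<subseteq> Es ! ix j"
    proof
      assume "Fs ! j \<subseteq> Es ! ix j"
      moreover have "Es ! ix j \<in> H" using Es(4) ix[OF j] by auto
      ultimately show False using hH assms(5) j n_def unfolding hereditary_def by auto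
    qed
    then obtain x where x: "x \<in> Fs ! j" "x \<notin> Es ! ix j" by auto
    have "x \<in> \<Union>(set Es)" using Es(1) x j n_def by auto
    then obtain i' where i': "i' < length Es" "x \<in> Es ! i'" by (auto simp: in_set_conv_nth)
    have mx: "Min (Fs ! j) \<le> x" using blk_elem[OF assms(3) _ x(1)] j n_def by auto
    have m1: "Min (Es ! ix j) \<le> Min (Fs ! j)" using blk_elem[OF Es(2)] ix[OF j] by auto
    consider "i' < ix j" | "i' = ix j" | "ix j < i'" by linarith
    thus ?thesis
    proof cases
      case 1
      have "Max (Es ! i') < Min (Es ! ix j)" using blk_lt[OF Es(2) 1] ix[OF j] by blast
      moreover have "x \<le> Max (Es ! i')" using blk_elem[OF Es(2) i'] by blast
      ultimately have False using mx m1 by linarith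
      thus ?thesis ..
    next
      case 2 thus ?thesis using x i' by auto
    next
      case 3
      have "Max (Es ! ix j) < Min (Es ! i')" using blk_lt[OF Es(2) 3 i'(1)] by blast
      moreover have "Min (Es ! i') \<le> x" using blk_elem[OF Es(2) i'] by blast
      ultimately have "Max (Es ! ix j) < x" by linarith
      thus ?thesis using x(1) by blast
    qed
  qed
  have ixmono: "ix j < ix j'" if "j < j'" "j' < n" for j j'
  proof (rule ccontr)
    assume "\<not> ix j < ix j'"
    hence le: "ix j' \<le> ix j" by simp
    have j: "j < n" using that by simp
    obtain x where x: "x \<in> Fs ! j" "Max (Es ! ix j) < x" using big[OF j] by auto
    have "x \<le> Max (Fs ! j)" using blk_elem[OF assms(3) _ x(1)] j n_def by blast
    moreover have "Max (Fs ! j) < Min (Fs ! j')" using blk_lt[OF assms(3) that(1)] that n_def by blast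
    ultimately have "x < Min (Fs ! j')" by linarith
    moreover have "Min (Fs ! j') \<le> Max (Es ! ix j')" using blk_elem[OF Es(2)] ix[OF that(2)] by auto
    moreover have "Max (Es ! ix j') \<le> Max (Es ! ix j)"
    proof (cases "ix j' = ix j")
      case False
      hence "ix j' < ix j" using le by simp
      hence "Max (Es ! ix j') < Min (Es ! ix j)" using blk_lt[OF Es(2)] ix[OF j] by blast
      moreover have "Min (Es ! ix j) \<le> Max (Es ! ix j)" using blk_elem[OF Es(2)] blk_ne[OF Es(2)] ix[OF j] by blast
      ultimately show ?thesis by linarith
    qed simp
    ultimately show False using x(2) by linarith
  qed
  define g where "g j = Min (Es ! ix j)" for j
  define h where "h j = Min (Fs ! j)" for j
  have gmono: "g j < g j'" if "j < j'" "j' < n" for j j'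
  proof -
    have "ix j < ix j'" "ix j' < length Es" using ixmono[OF that] ix[OF that(2)] by auto
    hence "Max (Es ! ix j) < Min (Es ! ix j')" using blk_lt[OF Es(2)] by blast
    moreover have "Min (Es ! ix j) \<le> Max (Es ! ix j)" using blk_elem[OF Es(2)] blk_ne[OF Es(2)] ix[of j] that by auto
    ultimately show ?thesis unfolding g_def by linarith
  qed
  have hmono: "h j < h j'" if "j < j'" "j' < n" for j j'
  proof -
    have "Max (Fs ! j) < Min (Fs ! j')" using blk_lt[OF assms(3) that(1)] that n_def by simp
    moreover have "Min (Fs ! j) \<le> Max (Fs ! j)" using blk_elem[OF assms(3)] blk_ne[OF assms(3)] that n_def by simp
    ultimately show ?thesis unfolding h_def by linarith
  qed
  have gh: "g j \<le> h j" if "j < n" for j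
    unfolding g_def h_def using blk_elem[OF Es(2)] ix[OF that] by auto
  have ginj: "inj_on g {..<n}"
  proof (rule inj_onI)
    fix a b assume ab: "a \<in> {..<n}" "b \<in> {..<n}" "g a = g b"
    show "a = b"
    proof (rule ccontr)
      assume "a \<noteq> b"
      hence "a < b \<or> b < a" by linarith
      thus False using gmono[of a b] gmono[of b a] ab by auto
    qed
  qed
  define A where "A = g ` {..<n}"
  have AG: "A \<in> G"
  proof -
    have "A \<subseteq> Min ` set Es" unfolding A_def g_def using ix nth_mem by blast
    thus ?thesis using hG Es(3) unfolding hereditary_def by blast
  qed
  define f where "f a = h (the_inv_into {..<n} g a)" for a
  have fg: "f (g j) = h j" if "j < n" for j
    unfolding f_def using the_inv_into_f_f[OF ginj] that by auto
  have smo: "strict_mono_on A f"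
  proof (rule strict_mono_onI)
    fix r s assume rs: "r \<in> A" "s \<in> A" "r < s"
    then obtain j j' where jj: "j < n" "j' < n" "r = g j" "s = g j'" unfolding A_def by blast
    have "j < j'"
    proof (rule ccontr)
      assume "\<not> j < j'"
      hence "j' < j \<or> j' = j" by linarith
      thus False using gmono[of j' j] jj rs(3) by auto
    qed
    hence "h j < h j'" using hmono jj(2) by blast
    thus "f r < f s" using fg[OF jj(1)] fg[OF jj(2)] jj(3,4) by simp
  qed
  have le: "\<forall>a\<in>A. a \<le> f a"
  proof
    fix a assume "a \<in> A"
    then obtain j where "j < n" "a = g j" unfolding A_def by blast
    thus "a \<le> f a" using fg gh by simp
  qed
  have fA: "f ` A \<in> G" using spec[OF bspec[OF sG[unfolded spreading_def] AG], of f] smo le by blast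
  have "f ` A = h ` {..<n}" unfolding A_def image_image
    by (rule image_cong) (simp_all add: fg)
  also have "\<dots> = Min ` set Fs" unfolding h_def n_def by (auto simp: in_set_conv_nth intro!: imageI)
  finally have "f ` A = Min ` set Fs" .
  with fA show ?thesis by simp
qed

end
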